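(* Let $m\ge n$, let $p\in(0,1)$ be rational and $\varepsilon>0$. Let $f:\mathbb{R}^{m\times n}\to\mathbb{R}$ be proper, bounded below, semi-algebraic, coercive and $L$-smooth (gradient $L$-Lipschitz in Frobenius norm), and let $$F(X)=f(X)+\sum_{i=1}^n(|\sigma_i(X)|+\varepsilon)^p,$$ where $\sigma_1(X)\ge\cdots\ge\sigma_n(X)$ are the singular values. Fix $0<\mu<1/L$, a starting point $X_0$, and for $t\ge0$ let $w_{t,i}=p/(\sigma_i(X_t)+\varepsilon)^{1-p}$ and $$X_{t+1}\in\arg\min_{X}\ \tfrac12\big\|X-(X_t-\mu\nabla f(X_t))\big\|_F^2+\mu\sum_{i=1}^n w_{t,i}|\sigma_i(X)|.$$ Let $\mathrm{limit}(X_0)$ be the set of matrices $\hat X$ such that $X_{t_l}\to\hat X$ for some increasing sequence of integers $t_l$. Then: (i) $\emptyset\neq\mathrm{limit}(X_0)\subset\mathrm{crit}(F)$, where $\mathrm{crit}(F)=\{X:0\in\partial F(X)\}$; (ii) $\lim_{t\to\infty}\mathrm{dist}(X_t,\mathrm{limit}(X_0))=0$; (iii) $\mathrm{limit}(X_0)$ is non-empty, compact and connected; (iv) $F$ is finite and constant on $\mathrm{limit}(X_0)$.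
   Context: $\partial F$ is the limiting subdifferential (limits of regular subgradients $y^k\in\hat\partial F(x^k)$ along $x^k\to x$ with $F(x^k)\to F(x)$, where $y\in\hat\partial F(x)$ iff $\liminf_{z\to0}\frac{F(x+z)-F(x)-\langle y,z\rangle}{\|z\|}\ge0$). $\mathrm{dist}(X,S)=\inf_{Y\in S}\|Y-X\|_F$. Semi-algebraic: graph is a finite union of finite intersections of sets $\{\zeta=0,\zeta'<0\}$ with $\zeta,\zeta'$ polynomials. Coercive: $f(X)\to\infty$ as $\|X\|_F\to\infty$. *)

theory Defs
  imports "HOL-Analysis.Analysis"
begin

text \<open>Matrices in R^{m x n} are rendered as real^'n^'m (rows indexed by 'm, columns by 'n).
  On this type, norm is the Frobenius norm and inner is the Frobenius inner product.\<close>

definition svd_values :: "real^'n^'m \<Rightarrow> (nat \<Rightarrow> real) \<Rightarrow> bool" where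
  "svd_values X s \<longleftrightarrow>
     (\<forall>i. CARD('n) \<le> i \<longrightarrow> s i = 0) \<and>
     (\<forall>i < CARD('n). 0 \<le> s i) \<and>
     (\<forall>i j. i \<le> j \<longrightarrow> j < CARD('n) \<longrightarrow> s j \<le> s i) \<and>
     (\<exists>(U::real^'m^'m) (V::real^'n^'n) (g::'n \<Rightarrow> 'm) (e::nat \<Rightarrow> 'n).
        orthogonal_matrix U \<and> orthogonal_matrix V \<and> inj g \<and>
        bij_betw e {..<CARD('n)} UNIV \<and>
        X = U ** (\<chi> a b. if a = g b then s (inv_into {..<CARD('n)} e b) else 0) ** transpose V)"

text \<open>sigma X i = the (i+1)-th largest singular value of X (i < n).\<close>
definition sing_val :: "real^'n^'m \<Rightarrow> nat \<Rightarrow> real" where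
  "sing_val X = (THE s. svd_values X s)"

inductive poly_fun :: "('a::euclidean_space \<Rightarrow> real) \<Rightarrow> bool" where
  const: "poly_fun (\<lambda>x. c)"
| coord: "b \<in> Basis \<Longrightarrow> poly_fun (\<lambda>x. x \<bullet> b)"
| add: "poly_fun p \<Longrightarrow> poly_fun q \<Longrightarrow> poly_fun (\<lambda>x. p x + q x)"
| mult: "poly_fun p \<Longrightarrow> poly_fun q \<Longrightarrow> poly_fun (\<lambda>x. p x * q x)"

definition semialgebraic_set :: "'a::euclidean_space set \<Rightarrow> bool" where
  "semialgebraic_set S \<longleftrightarrow>
     (\<exists>(k::nat) (l::nat) \<zeta> \<zeta>'. (\<forall>i<k. \<forall>j<l. poly_fun (\<zeta> i j) \<and> poly_fun (\<zeta>' i j)) \<and>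
        S = (\<Union>i<k. \<Inter>j<l. {x. \<zeta> i j x = 0 \<and> \<zeta>' i j x < 0}))"

definition semialgebraic_fun :: "('a::euclidean_space \<Rightarrow> real) \<Rightarrow> bool" where
  "semialgebraic_fun f \<longleftrightarrow> semialgebraic_set {(x, f x) | x. True}"

definition regular_subdiff :: "('a::real_inner \<Rightarrow> real) \<Rightarrow> 'a \<Rightarrow> 'a set" where
  "regular_subdiff F x =
     {y. Liminf (at 0) (\<lambda>z. ereal ((F (x + z) - F x - inner y z) / norm z)) \<ge> 0}"

definition limiting_subdiff :: "('a::real_inner \<Rightarrow> real) \<Rightarrow> 'a \<Rightarrow> 'a set" where
  "limiting_subdiff F x =
     {y. \<exists>xk yk. xk \<longlonglongrightarrow> x \<and> (\<lambda>k. F (xk k)) \<longlonglongrightarrow> F x \<and>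
                (\<forall>k. yk k \<in> regular_subdiff F (xk k)) \<and> yk \<longlonglongrightarrow> y}"

definition crit :: "('a::real_inner \<Rightarrow> real) \<Rightarrow> 'a set" where
  "crit F = {x. 0 \<in> limiting_subdiff F x}"

definition limit_set :: "(nat \<Rightarrow> 'a::topological_space) \<Rightarrow> 'a set" where
  "limit_set Xs = {Xh. \<exists>r. strict_mono r \<and> (Xs \<circ> r) \<longlonglongrightarrow> Xh}"

end

theory Submission
  imports Defs
begin

lemma quad_nonpos_imp_zero:
  fixes a b :: real
  assumes "\<And>t. 2*t*a + t^2*b \<le> 0" shows "a = 0"
proof -
  define c where "c = \<bar>b\<bar> + 1"
  have c: "c > 0" "c \<ge> 1" "b \<ge> -c + 1" by (auto simp: c_def)
  have "2*(a/c)*a + (a/c)^2*b \<le> 0" by (rule assms)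
  hence "c^2 * (2*(a/c)*a + (a/c)^2*b) \<le> 0"
    by (simp add: mult_nonneg_nonpos)
  moreover have "c^2 * (2*(a/c)*a + (a/c)^2*b) = 2*c*a^2 + a^2*b"
    using c by (simp add: field_simps power2_eq_square)
  ultimately have "2*c*a^2 + a^2*b \<le> 0" by simp
  moreover have "2*c*a^2 + a^2*b \<ge> a^2 * (c + 1)"
  proof -
    have "a^2 * b \<ge> a^2 * (-c + 1)" using c by (intro mult_left_mono) auto
    thus ?thesis by (simp add: algebra_simps)
  qed
  ultimately have "a^2 * (c+1) \<le> 0" by linarith
  hence "a^2 \<le> 0" using c by (simp add: mult_le_0_iff)
  thus ?thesis by simp
qed

lemma orth_diag_basis:
  fixes f :: "'a::euclidean_space \<Rightarrow> 'b::real_inner"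
  assumes lf: "linear f"
  shows "subspace W \<Longrightarrow> \<exists>B. B \<subseteq> W \<and> span B = W \<and> pairwise orthogonal B \<and> (\<forall>v\<in>B. norm v = 1)
      \<and> (\<forall>u\<in>B. \<forall>v\<in>B. u \<noteq> v \<longrightarrow> f u \<bullet> f v = 0)"
proof (induction "dim W" arbitrary: W rule: less_induct)
  case less
  note sW = less.prems
  show ?case
  proof (cases "W \<subseteq> {0}")
    case True
    then have "W = {0}" using subspace_0[OF sW] by blast
    then show ?thesis by (intro exI[of _ "{}"]) auto
  next
    case False
    then obtain z where z: "z \<in> W" "z \<noteq> 0" by blast
    let ?K = "sphere 0 1 \<inter> W"
    have cK: "compact ?K" using compact_sphere closed_subspace[OF sW] by (rule compact_Int_closed)
    have "z /\<^sub>R norm z \<in> ?K" using z sW by (auto simp: subspace_scale)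
    hence neK: "?K \<noteq> {}" by blast
    have bl: "bounded_linear f" using lf linear_conv_bounded_linear by blast
    have cont: "continuous_on ?K (\<lambda>v. norm (f v))"
      by (intro continuous_on_norm linear_continuous_on bl)
    obtain x where x: "x \<in> ?K" and xmax: "\<And>y. y \<in> ?K \<Longrightarrow> norm (f y) \<le> norm (f x)"
      using continuous_attains_sup[OF cK neK cont] by blast
    have nx: "norm x = 1" and xW: "x \<in> W" using x by auto
    have key: "f x \<bullet> f y = 0" if yW: "y \<in> W" and xy: "x \<bullet> y = 0" for y
    proof (rule quad_nonpos_imp_zero)
      fix t :: real
      define v where "v = x + t *\<^sub>R y"
      have vW: "v \<in> W" using xW yW sW by (simp add: v_def subspace_add subspace_scale)
      have xx: "x \<bullet> x = 1" using nx by (simp add: dot_square_norm)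
      have "v \<bullet> v = 1 + t^2 * (y \<bullet> y)"
        using xx xy by (simp add: v_def inner_add_left inner_add_right
            inner_commute power2_eq_square algebra_simps)
      hence nv: "(norm v)^2 = 1 + t^2 * (norm y)^2" by (simp add: power2_norm_eq_inner)
      hence nv0: "norm v > 0"
        by (metis add_pos_nonneg mult_nonneg_nonneg zero_less_norm_iff zero_less_one zero_le_power2 norm_zero power2_eq_square mult_zero_left)
      have "v /\<^sub>R norm v \<in> ?K" using vW nv0 sW by (auto simp: subspace_scale)
      hence "norm (f (v /\<^sub>R norm v)) \<le> norm (f x)" by (rule xmax)
      hence "norm (f v) / norm v \<le> norm (f x)"
        using nv0 by (simp add: linear_scale[OF lf] divide_inverse_commute)
      hence "norm (f v) \<le> norm (f x) * norm v" using nv0 by (simp add: divide_le_eq)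
      hence "(norm (f v))^2 \<le> (norm (f x))^2 * (norm v)^2"
        by (metis norm_ge_zero power_mono power_mult_distrib)
      moreover have "f v \<bullet> f v = f x \<bullet> f x + 2*t*(f x \<bullet> f y) + t^2 * (f y \<bullet> f y)"
        by (simp add: v_def linear_add[OF lf] linear_scale[OF lf]
            inner_add_left inner_add_right inner_commute power2_eq_square algebra_simps)
      hence "(norm (f v))^2 = (norm (f x))^2 + 2*t*(f x \<bullet> f y) + t^2 * (norm (f y))^2"
        by (simp add: power2_norm_eq_inner)
      ultimately show "2*t*(f x \<bullet> f y) + t^2 * ((norm (f y))^2 - (norm (f x))^2 * (norm y)^2) \<le> 0"
        using nv by (simp add: algebra_simps)
    qed
    define W' where "W' = W \<inter> {y. x \<bullet> y = 0}"
    have sW': "subspace W'" unfolding W'_def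
      by (intro subspace_inter sW subspace_hyperplane)
    have "x \<notin> W'" using nx by (auto simp: W'_def dot_square_norm)
    hence sub: "W' \<subset> W" using xW unfolding W'_def by blast
    have e1: "span W' = W'" using sW' span_eq_iff by blast
    have e2: "span W = W" using sW span_eq_iff by blast
    have "span W' \<subset> span W" unfolding e1 e2 by (rule sub)
    hence "dim W' < dim W" by (rule dim_psubset)
    then obtain B' where B': "B' \<subseteq> W'" "span B' = W'" "pairwise orthogonal B'" "\<forall>v\<in>B'. norm v = 1"
      "\<forall>u\<in>B'. \<forall>v\<in>B'. u \<noteq> v \<longrightarrow> f u \<bullet> f v = 0"
      using less.hyps sW' by blast
    have xB': "x \<notin> B'" using \<open>x \<notin> W'\<close> B'(1) by blast
    show ?thesis
    proof (intro exI[of _ "insert x B'"] conjI)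
      show "insert x B' \<subseteq> W" using xW B'(1) by (auto simp: W'_def)
      show "span (insert x B') = W"
      proof
        show "span (insert x B') \<subseteq> W" using xW B'(1) sW
          by (metis \<open>insert x B' \<subseteq> W\<close> span_minimal)
        show "W \<subseteq> span (insert x B')"
        proof
          fix y assume yW: "y \<in> W"
          have "y - (x \<bullet> y) *\<^sub>R x \<in> W'"
            using yW xW sW nx by (auto simp: W'_def subspace_diff subspace_scale inner_diff_right dot_square_norm)
          hence "y - (x \<bullet> y) *\<^sub>R x \<in> span (insert x B')"
            using B'(2) span_mono[of B' "insert x B'"] by blast
          moreover have "(x \<bullet> y) *\<^sub>R x \<in> span (insert x B')"
            by (simp add: span_base span_mul)
          ultimately have "y - (x \<bullet> y) *\<^sub>R x + (x \<bullet> y) *\<^sub>R x \<in> span (insert x B')"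
            by (rule span_add)
          thus "y \<in> span (insert x B')" by simp
        qed
      qed
      show "pairwise orthogonal (insert x B')"
        using B'(1,3) by (auto simp: pairwise_insert W'_def orthogonal_def inner_commute)
      show "\<forall>v\<in>insert x B'. norm v = 1" using nx B'(4) by auto
      show "\<forall>u\<in>insert x B'. \<forall>v\<in>insert x B'. u \<noteq> v \<longrightarrow> f u \<bullet> f v = 0"
        using B'(1,5) key unfolding W'_def by (fastforce simp: inner_commute)
    qed
  qed
qed

lemma norm_mat_vec_le:
  fixes A :: "real^'n^'m"
  shows "norm (A *v x) \<le> norm A * norm x"
proof -
  have "(norm (A *v x))^2 = (\<Sum>i\<in>UNIV. ((A *v x)$i)^2)"
    by (simp only: power2_norm_eq_inner) (simp add: inner_vec_def power2_eq_square)
  also have "\<dots> \<le> (\<Sum>i\<in>UNIV. (norm (A$i))^2 * (norm x)^2)"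
  proof (rule sum_mono)
    fix i
    have "\<bar>(A *v x)$i\<bar> \<le> norm (A$i) * norm x"
      by (simp add: matrix_vector_mul_component Cauchy_Schwarz_ineq2)
    hence "\<bar>(A *v x)$i\<bar>^2 \<le> (norm (A$i) * norm x)^2"
      by (rule power_mono) simp
    thus "((A *v x)$i)^2 \<le> (norm (A$i))^2 * (norm x)^2" by (simp add: power_mult_distrib)
  qed
  also have "\<dots> = (norm A)^2 * (norm x)^2"
    by (simp add: sum_distrib_right[symmetric] power2_norm_eq_inner inner_vec_def)
  also have "\<dots> = (norm A * norm x)^2" by (simp add: power_mult_distrib)
  finally show ?thesis
    by (meson norm_ge_zero mult_nonneg_nonneg power2_le_imp_le)
qed

lemma orth_norm:
  fixes U :: "real^'n^'n"
  assumes "orthogonal_matrix U"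
  shows "norm (U *v x) = norm x"
proof -
  have "orthogonal_transformation ((*v) U)"
    using assms by (simp add: orthogonal_transformation_matrix matrix_of_matrix_vector_mul)
  thus ?thesis by (rule orthogonal_transformation_norm)
qed

lemma svd_struct:
  fixes X :: "real^'n^'m"
  assumes "svd_values X s"
  obtains V :: "real^'n^'n" and idx :: "'n \<Rightarrow> nat" where "orthogonal_matrix V"
    "bij_betw idx UNIV {..<CARD('n)}"
    "\<And>x. (norm (X *v x))^2 = (\<Sum>b\<in>UNIV. (s (idx b))^2 * ((transpose V *v x)$b)^2)"
proof -
  obtain U :: "real^'m^'m" and V :: "real^'n^'n" and g :: "'n \<Rightarrow> 'm" and e :: "nat \<Rightarrow> 'n" where
    U: "orthogonal_matrix U" and V: "orthogonal_matrix V" and g: "inj g"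
    and e: "bij_betw e {..<CARD('n)} UNIV"
    and X: "X = U ** (\<chi> a b. if a = g b then s (inv_into {..<CARD('n)} e b) else 0) ** transpose V"
    using assms unfolding svd_values_def by blast
  define idx where "idx = inv_into {..<CARD('n)} e"
  define D :: "real^'n^'m" where "D = (\<chi> a b. if a = g b then s (idx b) else 0)"
  have bidx: "bij_betw idx UNIV {..<CARD('n)}" unfolding idx_def by (rule bij_betw_inv_into[OF e])
  have Dy: "(D *v y)$a = (if a \<in> range g then s (idx (inv g a)) * y $ (inv g a) else 0)" for y a
  proof (cases "a \<in> range g")
    case True
    then obtain b0 where a: "a = g b0" by blast
    have "(D *v y)$a = (\<Sum>j\<in>UNIV. (if b0 = j then s (idx j) else 0) * y $ j)"
      unfolding matrix_vector_mult_def D_def a by (simp add: inj_eq[OF g])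
    also have "\<dots> = (\<Sum>j\<in>UNIV. if b0 = j then s (idx j) * y $ j else 0)"
      by (intro sum.cong) auto
    also have "\<dots> = s (idx b0) * y$b0" by simp
    finally show ?thesis using a g by simp
  next
    case False
    then show ?thesis unfolding matrix_vector_mult_def D_def by (auto intro!: sum.neutral)
  qed
  have nD: "(norm (D *v y))^2 = (\<Sum>b\<in>UNIV. (s (idx b))^2 * (y$b)^2)" for y
  proof -
    have "(norm (D *v y))^2 = (\<Sum>a\<in>UNIV. ((D *v y)$a)^2)"
      by (simp only: power2_norm_eq_inner) (simp add: inner_vec_def power2_eq_square)
    also have "\<dots> = (\<Sum>a\<in>UNIV. if a \<in> range g then (s (idx (inv g a)) * y $ (inv g a))^2 else 0)"
      by (rule sum.cong) (auto simp: Dy)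
    also have "\<dots> = (\<Sum>a\<in>range g. (s (idx (inv g a)) * y $ (inv g a))^2)"
      by (simp add: sum.inter_restrict[symmetric])
    also have "\<dots> = (\<Sum>b\<in>UNIV. (s (idx b) * y $ b)^2)"
      using g by (simp add: sum.reindex)
    finally show ?thesis by (simp add: power_mult_distrib)
  qed
  have "(norm (X *v x))^2 = (\<Sum>b\<in>UNIV. (s (idx b))^2 * ((transpose V *v x)$b)^2)" for x
  proof -
    have "X *v x = U *v (D *v (transpose V *v x))"
      unfolding X D_def idx_def by (simp only: matrix_vector_mul_assoc matrix_mul_assoc)
    hence "norm (X *v x) = norm (D *v (transpose V *v x))" using orth_norm[OF U] by simp
    thus ?thesis using nD by simp
  qed
  with V bidx that show ?thesis by blast
qed

lemma svd_basic:
  fixes X :: "real^'n^'m"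
  assumes "svd_values X s"
  shows "\<And>i. i < CARD('n) \<Longrightarrow> 0 \<le> s i" "\<And>i. CARD('n) \<le> i \<Longrightarrow> s i = 0"
    "\<And>i j. i \<le> j \<Longrightarrow> j < CARD('n) \<Longrightarrow> s j \<le> s i"
  using assms unfolding svd_values_def by auto

lemma coord_subspace: "subspace {y::real^'n. \<forall>b. b \<notin> d \<longrightarrow> y$b = 0}"
  by (auto simp: subspace_def)

lemma dim_orth_image:
  fixes V :: "real^'n^'n"
  assumes V: "orthogonal_matrix V"
  shows "dim ((\<lambda>y. V *v y) ` {y::real^'n. \<forall>b. b \<notin> d \<longrightarrow> y$b = 0}) = card d"
proof -
  have inj: "inj ((*v) V)"
  proof
    fix y z assume "V *v y = V *v z"
    hence "transpose V *v (V *v y) = transpose V *v (V *v z)" by simp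
    thus "y = z" using V by (simp add: matrix_vector_mul_assoc orthogonal_matrix)
  qed
  have "dim ((\<lambda>y. V *v y) ` {y::real^'n. \<forall>b. b \<notin> d \<longrightarrow> y$b = 0})
      = dim {y::real^'n. \<forall>b. b \<notin> d \<longrightarrow> y$b = 0}"
    by (rule dim_image_eq[OF matrix_vector_mul_linear inj_on_subset[OF inj subset_UNIV]])
  also have "\<dots> = card d" using dim_substandard_cart[where 'a=real and d=d] unfolding dim_vec_eq .
  finally show ?thesis .
qed

lemma svd_lower:
  fixes X :: "real^'n^'m"
  assumes sv: "svd_values X s" and k: "k < CARD('n)"
  shows "\<exists>S. subspace S \<and> k < dim S \<and> (\<forall>x\<in>S. s k * norm x \<le> norm (X *v x))"
proof -
  obtain V :: "real^'n^'n" and idx where V: "orthogonal_matrix V"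
    and bidx: "bij_betw idx UNIV {..<CARD('n)}"
    and nX: "\<And>x. (norm (X *v x))^2 = (\<Sum>b\<in>UNIV. (s (idx b))^2 * ((transpose V *v x)$b)^2)"
    using svd_struct[OF sv] by blast
  note sb = svd_basic[OF sv]
  have idxlt: "idx b < CARD('n)" for b using bidx by (auto simp: bij_betw_def)
  define d where "d = {b. idx b \<le> k}"
  define C where "C = {y::real^'n. \<forall>b. b \<notin> d \<longrightarrow> y$b = 0}"
  define S where "S = (\<lambda>y. V *v y) ` C"
  have "idx ` d = {..k}"
  proof
    show "idx ` d \<subseteq> {..k}" by (auto simp: d_def)
    show "{..k} \<subseteq> idx ` d"
    proof
      fix i assume "i \<in> {..k}"
      hence "i \<in> idx ` UNIV" using bidx k by (auto simp: bij_betw_def)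
      thus "i \<in> idx ` d" using \<open>i \<in> {..k}\<close> by (auto simp: d_def)
    qed
  qed
  moreover have "inj_on idx d" using bidx by (auto simp: bij_betw_def inj_on_def)
  ultimately have cd: "card d = Suc k" using card_image[of idx d] by simp
  have dimS: "dim S = Suc k" unfolding S_def C_def using dim_orth_image[OF V, of d] cd by simp
  have sS: "subspace S" unfolding S_def C_def
    by (intro linear_subspace_image matrix_vector_mul_linear coord_subspace)
  have "s k * norm x \<le> norm (X *v x)" if "x \<in> S" for x
  proof -
    obtain y where y: "y \<in> C" and x: "x = V *v y" using \<open>x \<in> S\<close> by (auto simp: S_def)
    have ty: "transpose V *v x = y" using V by (simp add: x matrix_vector_mul_assoc orthogonal_matrix)
    have ny: "norm x = norm y" using orth_norm[OF V] x by simp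
    have "(norm y)^2 = (\<Sum>b\<in>UNIV. (y$b)^2)"
      by (simp only: power2_norm_eq_inner) (simp add: inner_vec_def power2_eq_square)
    hence "(s k * norm x)^2 = (\<Sum>b\<in>UNIV. (s k)^2 * (y$b)^2)"
      by (simp only: ny power_mult_distrib sum_distrib_left)
    also have "\<dots> \<le> (\<Sum>b\<in>UNIV. (s (idx b))^2 * (y$b)^2)"
    proof (rule sum_mono)
      fix b
      show "(s k)^2 * (y$b)^2 \<le> (s (idx b))^2 * (y$b)^2"
      proof (cases "idx b \<le> k")
        case True
        have "s k \<le> s (idx b)" "0 \<le> s k" using sb True k by auto
        hence "(s k)^2 \<le> (s (idx b))^2" by (intro power_mono) auto
        thus ?thesis by (intro mult_right_mono) auto
      next
        case False
        hence "y$b = 0" using y by (auto simp: C_def d_def)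
        thus ?thesis by simp
      qed
    qed
    also have "\<dots> = (norm (X *v x))^2" using nX ty by simp
    finally show ?thesis by (rule power2_le_imp_le) simp
  qed
  thus ?thesis using sS dimS by (intro exI[of _ S]) auto
qed

lemma svd_upper:
  fixes X :: "real^'n^'m"
  assumes sv: "svd_values X s" and k: "k < CARD('n)" and sS: "subspace S" and dS: "k < dim S"
    and t: "\<forall>x\<in>S. t * norm x \<le> norm (X *v x)"
  shows "t \<le> s k"
proof -
  obtain V :: "real^'n^'n" and idx where V: "orthogonal_matrix V"
    and bidx: "bij_betw idx UNIV {..<CARD('n)}"
    and nX: "\<And>x. (norm (X *v x))^2 = (\<Sum>b\<in>UNIV. (s (idx b))^2 * ((transpose V *v x)$b)^2)"
    using svd_struct[OF sv] by blast
  note sb = svd_basic[OF sv]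
  have idxlt: "idx b < CARD('n)" for b using bidx by (auto simp: bij_betw_def)
  define d where "d = {b. k \<le> idx b}"
  define C where "C = {y::real^'n. \<forall>b. b \<notin> d \<longrightarrow> y$b = 0}"
  define W where "W = (\<lambda>y. V *v y) ` C"
  have "idx ` d = {k..<CARD('n)}"
  proof
    show "idx ` d \<subseteq> {k..<CARD('n)}" using idxlt by (auto simp: d_def)
    show "{k..<CARD('n)} \<subseteq> idx ` d"
    proof
      fix i assume i: "i \<in> {k..<CARD('n)}"
      hence "i \<in> idx ` UNIV" using bidx by (auto simp: bij_betw_def)
      thus "i \<in> idx ` d" using i by (auto simp: d_def)
    qed
  qed
  moreover have "inj_on idx d" using bidx by (auto simp: bij_betw_def inj_on_def)
  ultimately have cd: "card d = CARD('n) - k" using card_image[of idx d] by simp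
  have dimW: "dim W = CARD('n) - k" unfolding W_def C_def using dim_orth_image[OF V, of d] cd by simp
  have sW: "subspace W" unfolding W_def C_def
    by (intro linear_subspace_image matrix_vector_mul_linear coord_subspace)
  have "dim {x + y |x y. x \<in> S \<and> y \<in> W} \<le> CARD('n)"
    using dim_subset_UNIV[of "{x + y |x y. x \<in> S \<and> y \<in> W}"] by (simp add: DIM_cart)
  with dim_sums_Int[OF sS sW] dimW dS k have "dim (S \<inter> W) \<noteq> 0" by linarith
  hence "\<not> (S \<inter> W \<subseteq> {0})" by (simp add: dim_eq_0)
  then obtain x where xS: "x \<in> S" and xW: "x \<in> W" and x0: "x \<noteq> 0"
    by auto
  obtain y where y: "y \<in> C" and x: "x = V *v y" using xW by (auto simp: W_def)
  have ty: "transpose V *v x = y" using V by (simp add: x matrix_vector_mul_assoc orthogonal_matrix)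
  have ny: "norm x = norm y" using orth_norm[OF V] x by simp
  have "(norm (X *v x))^2 = (\<Sum>b\<in>UNIV. (s (idx b))^2 * (y$b)^2)" using nX ty by simp
  also have "\<dots> \<le> (\<Sum>b\<in>UNIV. (s k)^2 * (y$b)^2)"
  proof (rule sum_mono)
    fix b
    show "(s (idx b))^2 * (y$b)^2 \<le> (s k)^2 * (y$b)^2"
    proof (cases "k \<le> idx b")
      case True
      have "s (idx b) \<le> s k" "0 \<le> s (idx b)" using sb True idxlt by auto
      hence "(s (idx b))^2 \<le> (s k)^2" by (intro power_mono) auto
      thus ?thesis by (intro mult_right_mono) auto
    next
      case False
      hence "y$b = 0" using y by (auto simp: C_def d_def)
      thus ?thesis by simp
    qed
  qed
  also have "\<dots> = (s k * norm x)^2"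
  proof -
    have ny2: "(norm y)^2 = (\<Sum>b\<in>UNIV. (y$b)^2)"
      by (simp only: power2_norm_eq_inner) (simp add: inner_vec_def power2_eq_square)
    have "(s k * norm x)^2 = (s k)^2 * (norm y)^2" by (simp only: ny power_mult_distrib)
    also have "\<dots> = (s k)^2 * (\<Sum>b\<in>UNIV. (y$b)^2)" by (simp only: ny2)
    also have "\<dots> = (\<Sum>b\<in>UNIV. (s k)^2 * (y$b)^2)" by (rule sum_distrib_left)
    finally show ?thesis by (rule sym)
  qed
  finally have sq: "(norm (X *v x))^2 \<le> (s k * norm x)^2" .
  have sk0: "0 \<le> s k" using sb(1) k by blast
  have "norm (X *v x) \<le> s k * norm x"
    by (rule power2_le_imp_le[OF sq]) (simp add: sk0)
  moreover have "t * norm x \<le> norm (X *v x)" using t xS by blast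
  ultimately have "t * norm x \<le> s k * norm x" by linarith
  moreover have "norm x > 0" using x0 by simp
  ultimately show ?thesis by (meson mult_le_cancel_right_pos)
qed

lemma orthonormal_basis_card:
  fixes B :: "(real^'n) set"
  assumes "pairwise orthogonal B" "\<forall>v\<in>B. norm v = 1" "span B = UNIV"
  shows "finite B" "card B = CARD('n)" "independent B"
proof -
  have "0 \<notin> B" using assms(2) by force
  thus ind: "independent B" using assms(1) pairwise_orthogonal_independent by blast
  thus "finite B" using finiteI_independent by blast
  have "dim (span B) = card B" using ind by (rule dim_span_eq_card_independent)
  thus "card B = CARD('n)" using assms(3) by (simp add: dim_UNIV DIM_cart)
qed

lemma svd_exists:
  fixes X :: "real^'n^'m"
  assumes mn: "CARD('n) \<le> CARD('m)"
  shows "\<exists>s. svd_values X s"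
proof -
  let ?n = "CARD('n)"
  obtain B :: "(real^'n) set" where B: "span B = UNIV" "pairwise orthogonal B" "\<forall>v\<in>B. norm v = 1"
    "\<forall>u\<in>B. \<forall>v\<in>B. u \<noteq> v \<longrightarrow> (X *v u) \<bullet> (X *v v) = 0"
    using orth_diag_basis[OF matrix_vector_mul_linear[of X], of UNIV] by auto
  have fB: "finite B" and cB: "card B = ?n" using orthonormal_basis_card[OF B(2,3,1)] by auto
  obtain xs where xs: "set xs = B" "distinct xs" using finite_distinct_list[OF fB] by blast
  define key where "key = (\<lambda>v. - norm (X *v v))"
  define ys where "ys = sort_key key xs"
  have ys: "set ys = B" "distinct ys" "sorted (map key ys)"
    using xs by (auto simp: ys_def)
  have lys: "length ys = ?n" using ys cB distinct_card by metis
  define w where "w = (\<lambda>i. ys ! i)"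
  have wB: "w i \<in> B" if "i < ?n" for i using that ys lys by (auto simp: w_def)
  have wn: "norm (w i) = 1" if "i < ?n" for i using wB[OF that] B(3) by blast
  have winj: "w i = w j \<longleftrightarrow> i = j" if "i < ?n" "j < ?n" for i j
    using that ys(2) lys by (simp add: w_def nth_eq_iff_index_eq)
  have worth: "w i \<bullet> w j = 0" if "i < ?n" "j < ?n" "i \<noteq> j" for i j
    using B(2) wB[OF that(1)] wB[OF that(2)] winj[OF that(1,2)] that(3)
    by (auto simp: pairwise_def orthogonal_def)
  have wXorth: "(X *v w i) \<bullet> (X *v w j) = 0" if "i < ?n" "j < ?n" "i \<noteq> j" for i j
    using B(4) wB[OF that(1)] wB[OF that(2)] winj[OF that(1,2)] that(3) by blast
  have wsort: "norm (X *v w j) \<le> norm (X *v w i)" if "i \<le> j" "j < ?n" for i j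
  proof -
    have "map key ys ! i \<le> map key ys ! j"
      using ys(3) that lys by (intro sorted_nth_mono) auto
    thus ?thesis using that lys by (simp add: key_def w_def)
  qed
  define s where "s = (\<lambda>i. if i < ?n then norm (X *v w i) else 0)"
  obtain e :: "nat \<Rightarrow> 'n" where e: "bij_betw e {..<?n} UNIV"
    using ex_bij_betw_nat_finite[of "UNIV :: 'n set"] by (auto simp: atLeast0LessThan)
  define idx where "idx = inv_into {..<?n} e"
  have idxlt: "idx c < ?n" for c
    using bij_betw_inv_into[OF e] by (auto simp: idx_def bij_betw_def)
  have idxinj: "idx c = idx c' \<longleftrightarrow> c = c'" for c c'
    using bij_betw_inv_into[OF e] by (auto simp: idx_def bij_betw_def inj_on_def)
  define V :: "real^'n^'n" where "V = (\<chi> r c. w (idx c) $ r)"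
  have colV: "column c V = w (idx c)" for c by (simp add: V_def column_def vec_eq_iff)
  have V: "orthogonal_matrix V"
    unfolding orthogonal_matrix_orthonormal_columns colV
    using wn idxlt worth idxinj by (auto simp: orthogonal_def)
  obtain g :: "'n \<Rightarrow> 'm" where g: "inj g"
    using card_le_inj[of "UNIV :: 'n set" "UNIV :: 'm set"] mn by auto
  define K where "K = {c. s (idx c) \<noteq> 0}"
  define u where "u = (\<lambda>c. (X *v w (idx c)) /\<^sub>R s (idx c))"
  have un: "norm (u c) = 1" if "c \<in> K" for c
    using that idxlt[of c] by (auto simp: K_def u_def s_def split: if_splits)
  have uorth: "u c \<bullet> u c' = 0" if "c \<in> K" "c' \<in> K" "c \<noteq> c'" for c c'
    using wXorth[OF idxlt idxlt, of c c'] idxinj[of c c'] that by (simp add: u_def)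
  have uinj: "inj_on u K"
  proof (rule inj_onI)
    fix c c' assume "c \<in> K" "c' \<in> K" "u c = u c'"
    thus "c = c'" using uorth[of c c'] un[of c] by (metis dot_square_norm power_one norm_one zero_neq_one)
  qed
  define P where "P = u ` K"
  have fP: "finite P" by (simp add: P_def)
  have Pn: "\<forall>p\<in>P. norm p = 1" using un by (auto simp: P_def)
  have Porth: "\<forall>p\<in>P. \<forall>q\<in>P. p \<noteq> q \<longrightarrow> p \<bullet> q = 0" using uorth by (auto simp: P_def)
  define W2 where "W2 = {y::real^'m. \<forall>p\<in>P. orthogonal p y}"
  have sW2: "subspace W2" unfolding W2_def by (rule subspace_orthogonal_to_vectors)
  obtain Q where Q: "Q \<subseteq> W2" "span Q = W2" "pairwise orthogonal Q" "\<forall>v\<in>Q. norm v = 1"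
    using orth_diag_basis[OF linear_id sW2] by auto
  have PQ: "P \<inter> Q = {}"
  proof -
    { fix p assume "p \<in> P" "p \<in> Q"
      hence "p \<bullet> p = 0" using Q(1) unfolding W2_def orthogonal_def by blast
      moreover have "norm p = 1" using Pn \<open>p \<in> P\<close> by blast
      ultimately have False by (simp add: dot_square_norm) }
    thus ?thesis by blast
  qed
  define R where "R = P \<union> Q"
  have QW: "\<forall>q\<in>Q. \<forall>p\<in>P. p \<bullet> q = 0" using Q(1) unfolding W2_def orthogonal_def by blast
  have Q3: "\<forall>x\<in>Q. \<forall>y\<in>Q. x \<noteq> y \<longrightarrow> x \<bullet> y = 0" using Q(3) unfolding pairwise_def orthogonal_def by blast
  have Rorth: "pairwise orthogonal R"
    unfolding pairwise_def R_def orthogonal_def using Porth QW Q3 by (metis Un_iff inner_commute)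
  have Rn: "\<forall>v\<in>R. norm v = 1" using Pn Q(4) by (auto simp: R_def)
  have Rspan: "span R = UNIV"
  proof -
    { fix y :: "real^'m"
      define r where "r = y - (\<Sum>p\<in>P. (p \<bullet> y) *\<^sub>R p)"
      have "r \<in> W2"
      proof -
        { fix q assume qP: "q \<in> P"
          have "(\<Sum>p\<in>P. (p \<bullet> y) * (q \<bullet> p)) = (\<Sum>p\<in>P. if p = q then q \<bullet> y else 0)"
          proof (rule sum.cong)
            fix p assume "p \<in> P"
            thus "(p \<bullet> y) * (q \<bullet> p) = (if p = q then q \<bullet> y else 0)"
              using Porth Pn qP by (auto simp: dot_square_norm)
          qed simp
          also have "\<dots> = q \<bullet> y" using fP qP by simp
          finally have "q \<bullet> r = 0" by (simp add: r_def inner_diff_right inner_sum_right) }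
        thus ?thesis by (auto simp: W2_def orthogonal_def)
      qed
      hence "r \<in> span R" using Q(2) span_mono[of Q R] by (auto simp: R_def)
      moreover have "(\<Sum>p\<in>P. (p \<bullet> y) *\<^sub>R p) \<in> span R"
        by (intro span_sum span_mul span_base) (auto simp: R_def)
      ultimately have "r + (\<Sum>p\<in>P. (p \<bullet> y) *\<^sub>R p) \<in> span R" by (rule span_add)
      hence "y \<in> span R" by (simp add: r_def) }
    thus ?thesis by auto
  qed
  have fR: "finite R" and cR: "card R = CARD('m)" using orthonormal_basis_card[OF Rorth Rn Rspan] by auto
  have fQ: "finite Q" using fR by (auto simp: R_def)
  have cP: "card P = card K" using uinj by (simp add: P_def card_image)
  have cQ: "card Q = CARD('m) - card K" using cR cP PQ fP fQ by (simp add: R_def card_Un_disjoint)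
  define M' where "M' = UNIV - g ` K"
  have cM': "card M' = CARD('m) - card K"
    using g by (simp add: M'_def card_Diff_subset card_image inj_on_subset)
  obtain \<phi> where \<phi>: "bij_betw \<phi> M' Q" using finite_same_card_bij[of M' Q] fQ cQ cM' by auto
  define Ucol where "Ucol = (\<lambda>a. if a \<in> g ` K then u (inv g a) else \<phi> a)"
  define U :: "real^'m^'m" where "U = (\<chi> r a. Ucol a $ r)"
  have colU: "column a U = Ucol a" for a by (simp add: U_def column_def vec_eq_iff)
  have Ucol_in: "a \<notin> g ` K \<Longrightarrow> Ucol a \<in> Q" for a
    using \<phi> by (auto simp: Ucol_def M'_def bij_betw_def)
  have U: "orthogonal_matrix U"
    unfolding orthogonal_matrix_orthonormal_columns colU
  proof (intro conjI allI impI)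
    fix a
    show "norm (Ucol a) = 1"
    proof (cases "a \<in> g ` K")
      case True
      then obtain c where "c \<in> K" "a = g c" by blast
      thus ?thesis using un g by (simp add: Ucol_def)
    next
      case False
      thus ?thesis using Ucol_in Q(4) by blast
    qed
  next
    fix a a' :: 'm assume aa: "a \<noteq> a'"
    show "orthogonal (Ucol a) (Ucol a')"
    proof (cases "a \<in> g ` K")
      case True
      then obtain c where c: "c \<in> K" "a = g c" by blast
      show ?thesis
      proof (cases "a' \<in> g ` K")
        case True
        then obtain c' where c': "c' \<in> K" "a' = g c'" by blast
        thus ?thesis using c aa uorth[of c c'] g by (auto simp: Ucol_def orthogonal_def)
      next
        case False
        hence "Ucol a' \<in> W2" using Ucol_in Q(1) by blast
        moreover have "Ucol a \<in> P" using c g by (simp add: Ucol_def P_def)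
        ultimately show ?thesis by (auto simp: W2_def)
      qed
    next
      case False
      hence aQ: "Ucol a \<in> Q" using Ucol_in by blast
      show ?thesis
      proof (cases "a' \<in> g ` K")
        case True
        then obtain c' where c': "c' \<in> K" "a' = g c'" by blast
        have "Ucol a \<in> W2" using aQ Q(1) by blast
        moreover have "Ucol a' \<in> P" using c' g by (simp add: Ucol_def P_def)
        ultimately show ?thesis by (auto simp: W2_def orthogonal_commute)
      next
        case False
        have "\<phi> a \<noteq> \<phi> a'" using \<phi> aa \<open>a \<notin> g ` K\<close> False
          by (auto simp: bij_betw_def inj_on_def M'_def)
        moreover have "Ucol a = \<phi> a" "Ucol a' = \<phi> a'" using \<open>a \<notin> g ` K\<close> False by (auto simp: Ucol_def)
        ultimately show ?thesis using Q(3) aQ Ucol_in[OF False] by (auto simp: pairwise_def)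
      qed
    qed
  qed
  define D :: "real^'n^'m" where "D = (\<chi> a b. if a = g b then s (idx b) else 0)"
  have XV: "X ** V = U ** D"
  proof -
    { fix r c
      have "(X ** V)$r$c = (X *v w (idx c))$r"
        by (simp add: matrix_matrix_mult_def matrix_vector_mult_def V_def)
      have "(U ** D)$r$c = (\<Sum>a\<in>UNIV. U$r$a * (if a = g c then s (idx c) else 0))"
        by (simp add: matrix_matrix_mult_def D_def)
      also have "\<dots> = (\<Sum>a\<in>UNIV. if a = g c then U$r$a * s (idx c) else 0)"
        by (rule sum.cong) auto
      also have "\<dots> = Ucol (g c) $ r * s (idx c)" by (simp add: U_def)
      also have "\<dots> = (X *v w (idx c))$r"
      proof (cases "c \<in> K")
        case True
        hence "Ucol (g c) = u c" using g by (simp add: Ucol_def)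
        thus ?thesis using True by (simp add: u_def K_def)
      next
        case False
        hence "s (idx c) = 0" by (simp add: K_def)
        hence "X *v w (idx c) = 0" using idxlt[of c] by (simp add: s_def)
        thus ?thesis using \<open>s (idx c) = 0\<close> by simp
      qed
      finally have "(X ** V)$r$c = (U ** D)$r$c"
        using \<open>(X ** V)$r$c = (X *v w (idx c))$r\<close> by simp }
    thus ?thesis by (simp add: vec_eq_iff)
  qed
  have "X = X ** (V ** transpose V)" using V by (simp add: orthogonal_matrix_def)
  also have "\<dots> = (X ** V) ** transpose V" by (simp only: matrix_mul_assoc)
  also have "\<dots> = U ** D ** transpose V" by (simp only: XV)
  finally have XD: "X = U ** D ** transpose V" .
  have "svd_values X s"
    unfolding svd_values_def
  proof (intro conjI allI impI)
    show "\<And>i. CARD('n) \<le> i \<Longrightarrow> s i = 0" by (simp add: s_def)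
    show "\<And>i. i < CARD('n) \<Longrightarrow> 0 \<le> s i" by (simp add: s_def)
    show "\<And>i j. i \<le> j \<Longrightarrow> j < CARD('n) \<Longrightarrow> s j \<le> s i" using wsort by (simp add: s_def)
    show "\<exists>(U::real^'m^'m) (V::real^'n^'n) (g::'n \<Rightarrow> 'm) (e::nat \<Rightarrow> 'n).
        orthogonal_matrix U \<and> orthogonal_matrix V \<and> inj g \<and>
        bij_betw e {..<CARD('n)} UNIV \<and>
        X = U ** (\<chi> a b. if a = g b then s (inv_into {..<CARD('n)} e b) else 0) ** transpose V"
    proof -
      have XD': "X = U ** (\<chi> a b. if a = g b then s (inv_into {..<CARD('n)} e b) else 0) ** transpose V"
        using XD unfolding D_def idx_def .
      show ?thesis using U V g e XD' by blast
    qed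
  qed
  thus ?thesis by blast
qed

lemma svd_unique:
  fixes X :: "real^'n^'m"
  assumes "svd_values X s" "svd_values X s'"
  shows "s = s'"
proof
  fix i
  show "s i = s' i"
  proof (cases "i < CARD('n)")
    case True
    have "s i \<le> s' i"
    proof -
      obtain S where "subspace S" "i < dim S" "\<forall>x\<in>S. s i * norm x \<le> norm (X *v x)"
        using svd_lower[OF assms(1) True] by blast
      thus ?thesis using svd_upper[OF assms(2) True] by blast
    qed
    moreover have "s' i \<le> s i"
    proof -
      obtain S where "subspace S" "i < dim S" "\<forall>x\<in>S. s' i * norm x \<le> norm (X *v x)"
        using svd_lower[OF assms(2) True] by blast
      thus ?thesis using svd_upper[OF assms(1) True] by blast
    qed
    ultimately show ?thesis by simp
  next
    case False
    thus ?thesis using svd_basic(2)[OF assms(1)] svd_basic(2)[OF assms(2)] by simp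
  qed
qed

lemma sing_val_svd:
  fixes X :: "real^'n^'m"
  assumes "CARD('n) \<le> CARD('m)"
  shows "svd_values X (sing_val X)"
proof -
  obtain s where s: "svd_values X s" using svd_exists[OF assms] by blast
  show ?thesis unfolding sing_val_def
    by (rule theI[of "svd_values X" s]) (use s svd_unique in blast)+
qed

lemma sing_val_nonneg:
  fixes X :: "real^'n^'m"
  assumes "CARD('n) \<le> CARD('m)"
  shows "0 \<le> sing_val X i"
proof (cases "i < CARD('n)")
  case True thus ?thesis using svd_basic(1)[OF sing_val_svd[OF assms]] by blast
next
  case False thus ?thesis using svd_basic(2)[OF sing_val_svd[OF assms]] by simp
qed

lemma sing_val_lip1:
  fixes X Y :: "real^'n^'m"
  assumes mn: "CARD('n) \<le> CARD('m)"
  shows "sing_val X i - norm (X - Y) \<le> sing_val Y i"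
proof (cases "i < CARD('n)")
  case True
  obtain S where S: "subspace S" "i < dim S" "\<forall>x\<in>S. sing_val X i * norm x \<le> norm (X *v x)"
    using svd_lower[OF sing_val_svd[OF mn] True] by blast
  have "\<forall>x\<in>S. (sing_val X i - norm (X - Y)) * norm x \<le> norm (Y *v x)"
  proof
    fix x assume "x \<in> S"
    hence a: "sing_val X i * norm x \<le> norm (X *v x)" using S by blast
    have b: "norm ((X - Y) *v x) \<le> norm (X - Y) * norm x" by (rule norm_mat_vec_le)
    have "X *v x = Y *v x + (X - Y) *v x" by (simp add: matrix_vector_mult_diff_rdistrib)
    hence "norm (X *v x) \<le> norm (Y *v x) + norm ((X - Y) *v x)" by (metis norm_triangle_ineq)
    thus "(sing_val X i - norm (X - Y)) * norm x \<le> norm (Y *v x)" using a b by (simp add: left_diff_distrib)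
  qed
  thus ?thesis using svd_upper[OF sing_val_svd[OF mn] True S(1,2)] by blast
next
  case False
  thus ?thesis using svd_basic(2)[OF sing_val_svd[OF mn]] by simp
qed

lemma sing_val_lip:
  fixes X Y :: "real^'n^'m"
  assumes mn: "CARD('n) \<le> CARD('m)"
  shows "\<bar>sing_val X i - sing_val Y i\<bar> \<le> norm (X - Y)"
  using sing_val_lip1[OF mn, of X i Y] sing_val_lip1[OF mn, of Y i X] by (simp add: norm_minus_commute abs_le_iff)

lemma sing_val_cont:
  fixes X :: "real^'n^'m"
  assumes mn: "CARD('n) \<le> CARD('m)"
  shows "isCont (\<lambda>X. sing_val X i) X"
proof (rule continuous_at_eps_delta[THEN iffD2], intro allI impI)
  fix e :: real assume "e > 0"
  thus "\<exists>d>0. \<forall>Y. dist Y X < d \<longrightarrow> dist (sing_val Y i) (sing_val X i) < e"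
    using sing_val_lip[OF mn] by (intro exI[of _ e]) (auto simp: dist_norm intro: le_less_trans)
qed

lemma powr_concave_ineq:
  fixes A B p :: real
  assumes A: "A > 0" and B: "B > 0" and p: "0 < p" "p < 1"
  shows "A powr p \<le> B powr p + p / B powr (1 - p) * (A - B)"
proof -
  have "A powr p * B powr (1 - p) \<le> p * A + (1 - p) * B"
    using Youngs_inequality_0[of p "1 - p" A B] A B p by simp
  moreover have Bp: "B powr (1 - p) > 0" using B by simp
  ultimately have "A powr p \<le> (p * A + (1 - p) * B) / B powr (1 - p)"
    by (simp add: pos_le_divide_eq)
  also have "\<dots> = p / B powr (1 - p) * (A - B) + B / B powr (1 - p)"
    using Bp by (simp add: field_simps)
  also have "B / B powr (1 - p) = B powr p"
  proof -
    have "B powr p * B powr (1 - p) = B" using B by (simp add: powr_add[symmetric])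
    thus ?thesis using Bp by (simp add: field_simps)
  qed
  finally show ?thesis by simp
qed

lemma line_deriv:
  fixes f :: "'a::real_inner \<Rightarrow> real"
  assumes grad: "\<And>X. (f has_derivative (\<lambda>H. inner (gradf X) H)) (at X)"
  shows "((\<lambda>\<tau>. f (X + \<tau> *\<^sub>R D)) has_real_derivative (gradf (X + \<tau> *\<^sub>R D) \<bullet> D)) (at \<tau>)"
proof -
  have l: "((\<lambda>\<tau>. X + \<tau> *\<^sub>R D) has_derivative (\<lambda>h. h *\<^sub>R D)) (at \<tau>)"
    by (auto intro!: derivative_eq_intros)
  have "((f \<circ> (\<lambda>\<tau>. X + \<tau> *\<^sub>R D)) has_derivative ((\<lambda>H. inner (gradf (X + \<tau> *\<^sub>R D)) H) \<circ> (\<lambda>h. h *\<^sub>R D))) (at \<tau>)"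
    by (rule diff_chain_at[OF l grad])
  hence "((\<lambda>\<tau>. f (X + \<tau> *\<^sub>R D)) has_derivative (\<lambda>h. gradf (X + \<tau> *\<^sub>R D) \<bullet> (h *\<^sub>R D))) (at \<tau>)"
    by (simp add: o_def)
  thus ?thesis
    by (rule has_derivative_imp_has_field_derivative) (simp add: o_def mult.commute)
qed

lemma descent_upper:
  fixes f :: "'a::real_inner \<Rightarrow> real"
  assumes grad: "\<And>X. (f has_derivative (\<lambda>H. inner (gradf X) H)) (at X)"
    and L: "\<And>X Y. norm (gradf X - gradf Y) \<le> L * norm (X - Y)" "0 \<le> L"
  shows "f (X + D) \<le> f X + gradf X \<bullet> D + L / 2 * (norm D)^2"
proof -
  define \<phi> where "\<phi> = (\<lambda>\<tau>. f (X + \<tau> *\<^sub>R D) - \<tau> * (gradf X \<bullet> D) - L / 2 * \<tau>^2 * (norm D)^2)"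
  have "\<phi> 1 \<le> \<phi> 0"
  proof (rule DERIV_nonpos_imp_nonincreasing[of 0 1])
    fix \<tau> :: real assume t: "0 \<le> \<tau>" "\<tau> \<le> 1"
    have d: "(\<phi> has_real_derivative (gradf (X + \<tau> *\<^sub>R D) \<bullet> D - gradf X \<bullet> D - L * \<tau> * (norm D)^2)) (at \<tau>)"
      unfolding \<phi>_def
      by (rule derivative_eq_intros line_deriv[OF grad] | simp)+
    have "gradf (X + \<tau> *\<^sub>R D) \<bullet> D - gradf X \<bullet> D = (gradf (X + \<tau> *\<^sub>R D) - gradf X) \<bullet> D"
      by (simp add: inner_diff_left)
    also have "\<dots> \<le> norm (gradf (X + \<tau> *\<^sub>R D) - gradf X) * norm D"
      by (rule norm_cauchy_schwarz)
    also have "\<dots> \<le> (L * norm (\<tau> *\<^sub>R D)) * norm D"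
      using L(1)[of "X + \<tau> *\<^sub>R D" X] by (intro mult_right_mono) auto
    also have "\<dots> = L * \<tau> * (norm D)^2" using t by (simp add: power2_eq_square)
    finally show "\<exists>y. (\<phi> has_real_derivative y) (at \<tau>) \<and> y \<le> 0" using d by (intro exI conjI) auto
  qed simp
  thus ?thesis by (simp add: \<phi>_def)
qed

lemma descent_lower:
  fixes f :: "'a::real_inner \<Rightarrow> real"
  assumes grad: "\<And>X. (f has_derivative (\<lambda>H. inner (gradf X) H)) (at X)"
    and L: "\<And>X Y. norm (gradf X - gradf Y) \<le> L * norm (X - Y)" "0 \<le> L"
  shows "f X + gradf X \<bullet> D - L / 2 * (norm D)^2 \<le> f (X + D)"
proof -
  have grad': "\<And>X. ((\<lambda>x. - f x) has_derivative (\<lambda>H. inner (- gradf X) H)) (at X)"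
    using grad by (auto intro!: derivative_eq_intros)
  have "- f (X + D) \<le> - f X + (- gradf X) \<bullet> D + L / 2 * (norm D)^2"
    by (rule descent_upper[where f="\<lambda>x. - f x" and gradf="\<lambda>x. - gradf x", OF grad' _ L(2)])
      (metis L(1) minus_diff_eq minus_diff_minus norm_minus_cancel)
  thus ?thesis by simp
qed

lemma infdist_lessE:
  fixes A :: "'a::metric_space set"
  assumes "infdist x A < e" "A \<noteq> {}"
  obtains a where "a \<in> A" "dist x a < e"
proof -
  have "(INF a\<in>A. dist x a) < e" using assms by (simp add: infdist_notempty)
  moreover have bdd: "bdd_below ((\<lambda>a. dist x a) ` A)" by (rule bdd_belowI[of _ 0]) auto
  ultimately show ?thesis using that by (auto simp: cINF_less_iff[OF assms(2) bdd])
qed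

lemma limit_set_iff:
  fixes Xs :: "nat \<Rightarrow> 'a::metric_space"
  shows "x \<in> limit_set Xs \<longleftrightarrow> (\<forall>e>0. \<forall>N. \<exists>t\<ge>N. dist (Xs t) x < e)"
proof
  assume "x \<in> limit_set Xs"
  then obtain r where r: "strict_mono r" "(Xs \<circ> r) \<longlonglongrightarrow> x" by (auto simp: limit_set_def)
  show "\<forall>e>0. \<forall>N. \<exists>t\<ge>N. dist (Xs t) x < e"
  proof (intro allI impI)
    fix e :: real and N assume e: "e > 0"
    obtain K where K: "\<And>k. k \<ge> K \<Longrightarrow> dist ((Xs \<circ> r) k) x < e"
      using r(2) e by (metis LIMSEQ_iff_nz dist_commute)
    have "dist (Xs (r (max K N))) x < e" using K[of "max K N"] by simp
    moreover have "r (max K N) \<ge> N" using seq_suble[OF r(1), of "max K N"] by simp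
    ultimately show "\<exists>t\<ge>N. dist (Xs t) x < e" by blast
  qed
next
  assume H: "\<forall>e>0. \<forall>N. \<exists>t\<ge>N. dist (Xs t) x < e"
  define P where "P = (\<lambda>k t. dist (Xs t) x < inverse (real (Suc k)))"
  have "\<exists>r. \<forall>k. P k (r k) \<and> r k < r (Suc k)"
  proof (rule dependent_nat_choice)
    show "\<exists>t. P 0 t" using H[rule_format, of 1 0] by (auto simp: P_def)
    fix t k assume "P k t"
    obtain t' where "t' \<ge> Suc t" "dist (Xs t') x < inverse (real (Suc (Suc k)))"
      using H by (metis inverse_positive_iff_positive of_nat_0_less_iff zero_less_Suc)
    thus "\<exists>t'. P (Suc k) t' \<and> t < t'" by (auto simp: P_def)
  qed
  then obtain r where r: "\<And>k. P k (r k)" "\<And>k. r k < r (Suc k)" by blast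
  have sm: "strict_mono r" using r(2) by (simp add: strict_mono_Suc_iff)
  have "(\<lambda>k. dist ((Xs \<circ> r) k) x) \<longlonglongrightarrow> 0"
  proof (rule tendsto_sandwich[of "\<lambda>_. 0" _ _ "\<lambda>k. inverse (real (Suc k))"])
    show "\<forall>\<^sub>F k in sequentially. 0 \<le> dist ((Xs \<circ> r) k) x" by simp
    show "\<forall>\<^sub>F k in sequentially. dist ((Xs \<circ> r) k) x \<le> inverse (real (Suc k))"
      using r(1) by (auto simp: P_def less_imp_le)
  qed (simp, rule LIMSEQ_inverse_real_of_nat)
  hence "(Xs \<circ> r) \<longlonglongrightarrow> x" using tendsto_dist_iff by blast
  thus "x \<in> limit_set Xs" using sm by (auto simp: limit_set_def)
qed

lemma limset_props:
  fixes Xs :: "nat \<Rightarrow> 'a::{real_normed_vector,heine_borel}"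
  assumes bnd: "bounded (range Xs)" and dif: "(\<lambda>t. Xs (Suc t) - Xs t) \<longlonglongrightarrow> 0"
  shows "limit_set Xs \<noteq> {}" "compact (limit_set Xs)" "connected (limit_set Xs)"
    "(\<lambda>t. infdist (Xs t) (limit_set Xs)) \<longlonglongrightarrow> 0"
proof -
  let ?L = "limit_set Xs"
  obtain R where R: "\<And>t. norm (Xs t) \<le> R" using bnd by (auto simp: bounded_iff)
  have inK: "Xs t \<in> cball 0 R" for t using R[of t] by simp
  have sub: "\<exists>x r1. strict_mono r1 \<and> ((Xs \<circ> r0) \<circ> r1) \<longlonglongrightarrow> x \<and> x \<in> ?L" if r0: "strict_mono r0" for r0 :: "nat \<Rightarrow> nat"
  proof -
    have sc: "seq_compact (cball (0::'a) R)" by (rule compact_imp_seq_compact[OF compact_cball])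
    obtain x r1 where "x \<in> cball 0 R" "strict_mono r1" "((Xs \<circ> r0) \<circ> r1) \<longlonglongrightarrow> x"
      using seq_compactE[OF sc, of "Xs \<circ> r0"] inK by auto
    moreover have "strict_mono (r0 \<circ> r1)" using r0 \<open>strict_mono r1\<close> by (rule strict_mono_o)
    ultimately show ?thesis unfolding limit_set_def by (metis (no_types, lifting) mem_Collect_eq o_assoc)
  qed
  show ne: "?L \<noteq> {}" using sub[of id] by (auto simp: strict_mono_def)
  have Lsub: "?L \<subseteq> cball 0 R"
  proof
    fix x assume "x \<in> ?L"
    then obtain r where r: "strict_mono r" "(Xs \<circ> r) \<longlonglongrightarrow> x" by (auto simp: limit_set_def)
    show "x \<in> cball 0 R"
      by (rule Lim_in_closed_set[OF closed_cball _ _ r(2)]) (auto simp: inK R)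
  qed
  have clo: "closed ?L"
  proof -
    have "closure ?L \<subseteq> ?L"
    proof
      fix x assume "x \<in> closure ?L"
      hence app: "\<forall>e>0. \<exists>y\<in>?L. dist y x < e" by (simp add: closure_approachable)
      show "x \<in> ?L" unfolding limit_set_iff
      proof (intro allI impI)
        fix e :: real and N assume e: "e > 0"
        obtain y where y: "y \<in> ?L" "dist y x < e/2" using app e by (meson half_gt_zero)
        obtain t where t: "t \<ge> N" "dist (Xs t) y < e/2" using y(1) e unfolding limit_set_iff
          by (meson half_gt_zero)
        have "dist (Xs t) x < e" using dist_triangle[of "Xs t" x y] y t by linarith
        thus "\<exists>t\<ge>N. dist (Xs t) x < e" using t by blast
      qed
    qed
    thus ?thesis by (simp add: closure_subset_eq)
  qed
  show cpt: "compact ?L" using clo Lsub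
    by (metis bounded_cball bounded_subset compact_eq_bounded_closed)
  show inf: "(\<lambda>t. infdist (Xs t) ?L) \<longlonglongrightarrow> 0"
  proof (rule ccontr)
    assume "\<not> ?thesis"
    then obtain e where e: "e > 0" and fr: "\<forall>N. \<exists>t\<ge>N. \<not> infdist (Xs t) ?L < e"
      unfolding LIMSEQ_iff by (auto simp: infdist_nonneg)
    define T where "T = {t. e \<le> infdist (Xs t) ?L}"
    have "infinite T" unfolding T_def infinite_nat_iff_unbounded_le using fr by (auto simp: not_less)
    then obtain r0 :: "nat \<Rightarrow> nat" where r0: "strict_mono r0" "\<And>k. r0 k \<in> T"
      using infinite_enumerate by blast
    obtain x r1 where r1: "strict_mono r1" "((Xs \<circ> r0) \<circ> r1) \<longlonglongrightarrow> x" "x \<in> ?L"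
      using sub[OF r0(1)] by blast
    obtain K where K: "\<And>k. k \<ge> K \<Longrightarrow> dist (((Xs \<circ> r0) \<circ> r1) k) x < e"
      using r1(2) e by (metis LIMSEQ_iff_nz dist_commute)
    have "infdist (Xs (r0 (r1 K))) ?L \<le> dist (Xs (r0 (r1 K))) x" using r1(3) by (rule infdist_le)
    also have "\<dots> < e" using K[of K] by simp
    finally show False using r0(2)[of "r1 K"] by (simp add: T_def)
  qed
  show "connected ?L"
  proof (rule ccontr)
    assume "\<not> connected ?L"
    then obtain E1 E2 where E: "closed E1" "closed E2" "?L \<subseteq> E1 \<union> E2" "E1 \<inter> E2 \<inter> ?L = {}"
      "E1 \<inter> ?L \<noteq> {}" "E2 \<inter> ?L \<noteq> {}"
      unfolding connected_closed by blast
    define A where "A = E1 \<inter> ?L"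
    define B where "B = E2 \<inter> ?L"
    have cA: "compact A" unfolding A_def using compact_Int_closed[OF cpt E(1)] by (simp add: Int_commute)
    have clB: "closed B" unfolding B_def using clo E(2) by (simp add: closed_Int)
    have "A \<inter> B = {}" using E(4) by (auto simp: A_def B_def)
    then obtain d where d: "d > 0" "\<And>a b. a \<in> A \<Longrightarrow> b \<in> B \<Longrightarrow> d \<le> dist a b"
      using separate_compact_closed[OF cA clB] by blast
    have d3: "d/3 > 0" using d by simp
    obtain N1 where N1': "\<forall>t\<ge>N1. norm (infdist (Xs t) ?L - 0) < d/3"
      using inf[unfolded LIMSEQ_iff, rule_format, OF d3] by blast
    have N1: "infdist (Xs t) ?L < d/3" if "t \<ge> N1" for t
      using N1' that infdist_nonneg[of "Xs t" ?L] by (metis abs_of_nonneg diff_zero real_norm_def)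
    obtain N2 where N2': "\<forall>t\<ge>N2. norm (Xs (Suc t) - Xs t - 0) < d/3"
      using dif[unfolded LIMSEQ_iff, rule_format, OF d3] by blast
    have N2: "norm (Xs (Suc t) - Xs t) < d/3" if "t \<ge> N2" for t
      using N2' that by (metis diff_zero)
    define N where "N = max N1 N2"
    define nA where "nA = (\<lambda>t. \<exists>a\<in>A. dist (Xs t) a < d/3)"
    define nB where "nB = (\<lambda>t. \<exists>b\<in>B. dist (Xs t) b < d/3)"
    have AB: "A \<union> B = ?L" using E(3) by (auto simp: A_def B_def)
    have either: "nA t \<or> nB t" if "t \<ge> N" for t
    proof -
      have "t \<ge> N1" using that by (simp add: N_def)
      then obtain y where "y \<in> ?L" "dist (Xs t) y < d/3"
        using infdist_lessE[OF N1[of t] ne] by blast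
      thus ?thesis using AB by (auto simp: nA_def nB_def)
    qed
    have notboth: "\<not> (nA t \<and> nB t)" for t
    proof
      assume "nA t \<and> nB t"
      then obtain a b where ab: "a \<in> A" "b \<in> B" "dist (Xs t) a < d/3" "dist (Xs t) b < d/3"
        by (auto simp: nA_def nB_def)
      have "dist a b \<le> dist (Xs t) a + dist (Xs t) b" by (rule dist_triangle3)
      thus False using d(2)[OF ab(1,2)] ab(3,4) d(1) by linarith
    qed
    have stepA: "nA (Suc t)" if tN: "t \<ge> N" and hA: "nA t" for t
    proof (rule ccontr)
      assume "\<not> nA (Suc t)"
      hence "nB (Suc t)" using either[of "Suc t"] tN by auto
      then obtain b where b: "b \<in> B" "dist (Xs (Suc t)) b < d/3" by (auto simp: nB_def)
      obtain a where a: "a \<in> A" "dist (Xs t) a < d/3" using hA unfolding nA_def by blast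
      have st: "dist (Xs (Suc t)) (Xs t) < d/3" using N2[of t] tN by (simp add: N_def dist_norm)
      have "dist a b \<le> dist a (Xs t) + dist (Xs t) b" by (rule dist_triangle)
      also have "dist (Xs t) b \<le> dist (Xs t) (Xs (Suc t)) + dist (Xs (Suc t)) b" by (rule dist_triangle)
      finally have "dist a b < d"
        using a(2) b(2) st by (simp add: dist_commute)
      thus False using d(2)[OF a(1) b(1)] d(1) by linarith
    qed
    obtain a where aA: "a \<in> A" using E(5) by (auto simp: A_def)
    obtain b where bB: "b \<in> B" using E(6) by (auto simp: B_def)
    have "a \<in> ?L" using aA by (simp add: A_def)
    from this[unfolded limit_set_iff, rule_format, OF d3, of N]
    obtain t0 where t0: "t0 \<ge> N" "dist (Xs t0) a < d/3" by blast
    have allA: "nA (t0 + k)" for k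
    proof (induction k)
      case 0 thus ?case using t0 aA by (auto simp: nA_def)
    next
      case (Suc k) thus ?case using stepA[of "t0 + k"] t0 by simp
    qed
    have "b \<in> ?L" using bB by (simp add: B_def)
    from this[unfolded limit_set_iff, rule_format, OF d3, of t0]
    obtain t1 where t1: "t1 \<ge> t0" "dist (Xs t1) b < d/3" by blast
    have "nB t1" using t1 bB by (auto simp: nB_def)
    moreover have "nA t1" using allA[of "t1 - t0"] t1 by simp
    ultimately show False using notboth by blast
  qed
qed

theorem lemma4:
  fixes f :: "real^'n^'m \<Rightarrow> real" and gradf :: "real^'n^'m \<Rightarrow> real^'n^'m"
    and p \<epsilon> L \<mu> :: real and X0 :: "real^'n^'m" and Xs :: "nat \<Rightarrow> real^'n^'m"
    and F :: "real^'n^'m \<Rightarrow> real"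
  assumes mn: "CARD('n) \<le> CARD('m)"
    and p: "p \<in> \<rat>" "0 < p" "p < 1"
    and eps: "0 < \<epsilon>"
    and bdd: "bdd_below (range f)"
    and semialg: "semialgebraic_fun f"
    and coercive: "filterlim f at_top at_infinity"
    and grad: "\<And>X. (f has_derivative (\<lambda>H. inner (gradf X) H)) (at X)"
    and L: "0 < L" "\<And>X Y. norm (gradf X - gradf Y) \<le> L * norm (X - Y)"
    and F_def: "F = (\<lambda>X. f X + (\<Sum>i<CARD('n). (\<bar>sing_val X i\<bar> + \<epsilon>) powr p))"
    and mu: "0 < \<mu>" "\<mu> < 1 / L"
    and X0: "Xs 0 = X0"
    and step: "\<And>t Y.
       (1/2) * (norm (Xs (Suc t) - (Xs t - \<mu> *\<^sub>R gradf (Xs t))))\<^sup>2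
         + \<mu> * (\<Sum>i<CARD('n). (p / (sing_val (Xs t) i + \<epsilon>) powr (1 - p)) * \<bar>sing_val (Xs (Suc t)) i\<bar>)
       \<le> (1/2) * (norm (Y - (Xs t - \<mu> *\<^sub>R gradf (Xs t))))\<^sup>2
         + \<mu> * (\<Sum>i<CARD('n). (p / (sing_val (Xs t) i + \<epsilon>) powr (1 - p)) * \<bar>sing_val Y i\<bar>)"
  shows "(limit_set Xs \<noteq> {} \<and> limit_set Xs \<subseteq> crit F)
    \<and> ((\<lambda>t. infdist (Xs t) (limit_set Xs)) \<longlonglongrightarrow> 0)
    \<and> (limit_set Xs \<noteq> {} \<and> compact (limit_set Xs) \<and> connected (limit_set Xs))
    \<and> (\<exists>c. \<forall>X \<in> limit_set Xs. F X = c)"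
proof -
  let ?n = "CARD('n)"
  let ?L = "limit_set Xs"
  have sv0: "\<And>(X::real^'n^'m) i. 0 \<le> sing_val X i" using sing_val_nonneg[OF mn] by blast
  have svlip: "\<And>(X::real^'n^'m) Y i. \<bar>sing_val X i - sing_val Y i\<bar> \<le> norm (X - Y)" using sing_val_lip[OF mn] by blast
  have svcont: "\<And>(X::real^'n^'m) i. isCont (\<lambda>X. sing_val X i) X" using sing_val_cont[OF mn] by blast
  define h where "h = (\<lambda>a::real. (a + \<epsilon>) powr p)"
  define w where "w = (\<lambda>a::real. p / (a + \<epsilon>) powr (1 - p))"
  have Fh: "F X = f X + (\<Sum>i<?n. h (sing_val X i))" for X
    using sv0 by (simp add: F_def h_def)
  have conc: "h b \<le> h a + w a * (b - a)" if "0 \<le> a" "0 \<le> b" for a b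
    using powr_concave_ineq[of "b + \<epsilon>" "a + \<epsilon>" p] eps p that by (simp add: h_def w_def)
  have svne: "sing_val X i + \<epsilon> \<noteq> 0" for X :: "real^'n^'m" and i
    using sv0[of X i] eps by linarith
  have L0: "0 \<le> L" using L(1) by simp
  have Lmu: "L * \<mu> < 1" using mu L(1) by (simp add: field_simps)
  define c where "c = 1 / (2 * \<mu>) - L / 2"
  have cpos: "c > 0"
  proof -
    have "L < 1 / \<mu>" using Lmu mu(1) by (simp add: field_simps)
    thus ?thesis by (simp add: c_def field_simps)
  qed
  have step': "(1/2) * (norm (Xs (Suc t) - (Xs t - \<mu> *\<^sub>R gradf (Xs t))))\<^sup>2
         + \<mu> * (\<Sum>i<?n. w (sing_val (Xs t) i) * sing_val (Xs (Suc t)) i)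
       \<le> (1/2) * (norm (Y - (Xs t - \<mu> *\<^sub>R gradf (Xs t))))\<^sup>2
         + \<mu> * (\<Sum>i<?n. w (sing_val (Xs t) i) * sing_val Y i)" for t Y
    using step[of t Y] sv0 by (simp add: w_def)
  have normsq: "(norm (a + b))^2 = (norm a)^2 + 2 * (a \<bullet> b) + (norm b)^2" for a b :: "real^'n^'m"
    by (simp add: power2_norm_eq_inner inner_add_left inner_add_right inner_commute)
  have dec: "F (Xs (Suc t)) + c * (norm (Xs (Suc t) - Xs t))^2 \<le> F (Xs t)" for t
  proof -
    define X where "X = Xs t"
    define X' where "X' = Xs (Suc t)"
    define G where "G = gradf X"
    define Dv where "Dv = X' - X"
    define S where "S = (\<Sum>i<?n. w (sing_val X i) * (sing_val X' i - sing_val X i))"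
    have st: "(1/2) * (norm (X' - (X - \<mu> *\<^sub>R G)))\<^sup>2 + \<mu> * (\<Sum>i<?n. w (sing_val X i) * sing_val X' i)
       \<le> (1/2) * (norm (X - (X - \<mu> *\<^sub>R G)))\<^sup>2 + \<mu> * (\<Sum>i<?n. w (sing_val X i) * sing_val X i)"
      using step'[of t X] by (simp add: X_def X'_def G_def)
    have e1: "X' - (X - \<mu> *\<^sub>R G) = Dv + \<mu> *\<^sub>R G" by (simp add: Dv_def)
    have e2: "(norm (Dv + \<mu> *\<^sub>R G))^2 = (norm Dv)^2 + 2 * \<mu> * (Dv \<bullet> G) + \<mu>^2 * (norm G)^2"
      using normsq[of Dv "\<mu> *\<^sub>R G"] by (simp add: power_mult_distrib)
    have e3: "(norm (X - (X - \<mu> *\<^sub>R G)))^2 = \<mu>^2 * (norm G)^2" by (simp add: power_mult_distrib)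
    have e4: "(\<Sum>i<?n. w (sing_val X i) * sing_val X' i) - (\<Sum>i<?n. w (sing_val X i) * sing_val X i) = S"
      by (simp add: S_def sum_subtractf[symmetric] right_diff_distrib)
    have "(1/2) * (norm Dv)^2 + \<mu> * (Dv \<bullet> G) + \<mu> * S \<le> 0"
      using st e4 unfolding e1 e2 e3 by (simp add: algebra_simps)
    hence "\<mu> * (S + Dv \<bullet> G + (norm Dv)^2 / (2 * \<mu>)) \<le> 0"
      using mu(1) by (simp add: algebra_simps)
    hence S: "S \<le> - (Dv \<bullet> G) - (norm Dv)^2 / (2 * \<mu>)"
      using mu(1) by (simp add: mult_le_0_iff)
    have hs: "(\<Sum>i<?n. h (sing_val X' i)) \<le> (\<Sum>i<?n. h (sing_val X i)) + S"
    proof -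
      have "(\<Sum>i<?n. h (sing_val X' i)) \<le> (\<Sum>i<?n. h (sing_val X i) + w (sing_val X i) * (sing_val X' i - sing_val X i))"
        by (intro sum_mono conc sv0)
      thus ?thesis by (simp add: S_def sum.distrib)
    qed
    have fd: "f X' \<le> f X + G \<bullet> Dv + L / 2 * (norm Dv)^2"
      using descent_upper[OF grad L(2) L0, of X Dv] by (simp add: G_def Dv_def)
    have "F X' \<le> f X + G \<bullet> Dv + L / 2 * (norm Dv)^2 + (\<Sum>i<?n. h (sing_val X i)) + S"
      using fd hs by (simp add: Fh)
    also have "\<dots> \<le> F X - c * (norm Dv)^2"
      using S by (simp add: Fh c_def inner_commute algebra_simps)
    finally show ?thesis by (simp add: X_def X'_def Dv_def)
  qed
  have Fdec: "F (Xs (Suc t)) \<le> F (Xs t)" for t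
    using dec[of t] cpos by (smt (verit) mult_nonneg_nonneg zero_le_power2)
  have Fanti: "antimono_on UNIV (\<lambda>t. F (Xs t))" unfolding decseq_Suc_iff using Fdec by blast
  have FX0: "F (Xs t) \<le> F X0" for t
  proof (induction t)
    case 0 thus ?case using X0 by simp
  next
    case (Suc t) thus ?case using Fdec[of t] by linarith
  qed
  have flow: "Inf (range f) \<le> f X" for X by (rule cInf_lower[OF _ bdd]) simp
  have hpos: "0 \<le> (\<Sum>i<?n. h (sing_val X i))" for X by (intro sum_nonneg) (simp add: h_def)
  have fF: "f X \<le> F X" for X using hpos[of X] by (simp add: Fh)
  obtain Fs where Flim: "(\<lambda>t. F (Xs t)) \<longlonglongrightarrow> Fs"
    using decseq_convergent[OF Fanti, of "Inf (range f)"] flow fF by (meson order_trans)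
  have dif: "(\<lambda>t. Xs (Suc t) - Xs t) \<longlonglongrightarrow> 0"
  proof -
    have d0: "(\<lambda>t. (F (Xs t) - F (Xs (Suc t))) / c) \<longlonglongrightarrow> (Fs - Fs) / c"
      by (intro tendsto_intros Flim LIMSEQ_Suc[OF Flim]) (use cpos in simp)
    have "(\<lambda>t. (norm (Xs (Suc t) - Xs t))^2) \<longlonglongrightarrow> 0"
    proof (rule tendsto_sandwich[of "\<lambda>_. 0" _ _ "\<lambda>t. (F (Xs t) - F (Xs (Suc t))) / c"])
      have "\<forall>t. (norm (Xs (Suc t) - Xs t))^2 \<le> (F (Xs t) - F (Xs (Suc t))) / c"
      proof
        fix t
        have "c * (norm (Xs (Suc t) - Xs t))^2 \<le> F (Xs t) - F (Xs (Suc t))" using dec[of t] by linarith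
        thus "(norm (Xs (Suc t) - Xs t))^2 \<le> (F (Xs t) - F (Xs (Suc t))) / c"
          using cpos by (simp add: pos_le_divide_eq mult.commute)
      qed
      thus "\<forall>\<^sub>F t in sequentially. (norm (Xs (Suc t) - Xs t))^2 \<le> (F (Xs t) - F (Xs (Suc t))) / c"
        by (rule always_eventually)
    qed (use d0 in auto)
    hence "(\<lambda>t. sqrt ((norm (Xs (Suc t) - Xs t))^2)) \<longlonglongrightarrow> sqrt 0" by (rule tendsto_real_sqrt)
    hence "(\<lambda>t. norm (Xs (Suc t) - Xs t)) \<longlonglongrightarrow> 0" by simp
    thus ?thesis by (simp add: tendsto_norm_zero_iff)
  qed
  have bnd: "bounded (range Xs)"
  proof -
    have "\<forall>\<^sub>F X in at_infinity. F X0 + 1 \<le> f X" using coercive by (simp add: filterlim_at_top)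
    then obtain b where b: "\<And>X. b \<le> norm X \<Longrightarrow> F X0 + 1 \<le> f X" by (auto simp: eventually_at_infinity)
    have "norm (Xs t) \<le> b" for t
    proof (rule ccontr)
      assume "\<not> norm (Xs t) \<le> b"
      hence "F X0 + 1 \<le> f (Xs t)" using b by simp
      thus False using fF[of "Xs t"] FX0[of t] by linarith
    qed
    thus ?thesis by (auto simp: bounded_iff)
  qed
  note LP = limset_props[OF bnd dif]
  have svtend: "((\<lambda>y. sing_val (g y) i) \<longlongrightarrow> sing_val x i) FF" if "(g \<longlongrightarrow> x) FF"
    for g :: "'z \<Rightarrow> real^'n^'m" and x i FF
    using isCont_tendsto_compose[OF svcont that] .
  have Fcont: "isCont F X" for X
  proof -
    have fc: "isCont f X" using has_derivative_continuous[OF grad] by blast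
    have "((\<lambda>Y. f Y + (\<Sum>i<?n. (\<bar>sing_val Y i\<bar> + \<epsilon>) powr p)) \<longlongrightarrow>
        f X + (\<Sum>i<?n. (\<bar>sing_val X i\<bar> + \<epsilon>) powr p)) (at X)"
    proof (intro tendsto_add tendsto_sum tendsto_powr tendsto_const tendsto_rabs)
      show "(f \<longlongrightarrow> f X) (at X)" using fc by (simp add: isCont_def)
      fix i show "((\<lambda>Y. sing_val Y i) \<longlongrightarrow> sing_val X i) (at X)" using svcont by (simp add: isCont_def)
      show "\<bar>sing_val X i\<bar> + \<epsilon> \<noteq> 0" using eps by simp
    qed
    thus ?thesis by (simp add: F_def isCont_def)
  qed
  have gtend: "((\<lambda>y. gradf (g y)) \<longlongrightarrow> gradf x) FF" if gl: "(g \<longlongrightarrow> x) FF"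
    for g :: "'z \<Rightarrow> real^'n^'m" and x FF
  proof -
    have "((\<lambda>y. gradf (g y) - gradf x) \<longlongrightarrow> 0) FF"
    proof (rule Lim_null_comparison)
      show "\<forall>\<^sub>F y in FF. norm (gradf (g y) - gradf x) \<le> L * norm (g y - x)" using L(2) by simp
      have "((\<lambda>y. g y - x) \<longlongrightarrow> 0) FF" using gl by (simp add: LIM_zero)
      hence "((\<lambda>y. norm (g y - x)) \<longlongrightarrow> 0) FF" by (simp add: tendsto_norm_zero_iff)
      thus "((\<lambda>y. L * norm (g y - x)) \<longlongrightarrow> 0) FF" using tendsto_mult_right_zero by blast
    qed
    thus ?thesis by (simp add: LIM_zero_iff)
  qed
  have Fconst: "F x = Fs" if xL0: "x \<in> ?L" for x
  proof -
    obtain r where r: "strict_mono r" "(Xs \<circ> r) \<longlonglongrightarrow> x" using xL0 by (auto simp: limit_set_def)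
    have "(\<lambda>k. F ((Xs \<circ> r) k)) \<longlonglongrightarrow> F x" using isCont_tendsto_compose[OF Fcont r(2)] .
    moreover have "(\<lambda>k. F ((Xs \<circ> r) k)) \<longlonglongrightarrow> Fs" using LIMSEQ_subseq_LIMSEQ[OF Flim r(1)] by (simp add: o_def)
    ultimately show ?thesis using LIMSEQ_unique by blast
  qed
  have crit: "x \<in> crit F" if xL: "x \<in> ?L" for x
  proof -
    obtain r where r: "strict_mono r" "(Xs \<circ> r) \<longlonglongrightarrow> x" using xL by (auto simp: limit_set_def)
    have A1: "(\<lambda>k. Xs (r k)) \<longlonglongrightarrow> x" using r(2) by (simp add: o_def)
    have "(\<lambda>k. Xs (Suc (r k)) - Xs (r k)) \<longlonglongrightarrow> 0" using LIMSEQ_subseq_LIMSEQ[OF dif r(1)] by (simp add: o_def)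
    hence "(\<lambda>k. Xs (r k) + (Xs (Suc (r k)) - Xs (r k))) \<longlonglongrightarrow> x + 0" using A1 by (intro tendsto_add)
    hence A2: "(\<lambda>k. Xs (Suc (r k))) \<longlonglongrightarrow> x" by simp
    define G where "G = gradf x"
    define Z where "Z = x - \<mu> *\<^sub>R G"
    define wh where "wh = (\<lambda>i. w (sing_val x i))"
    have opt: "(1/2) * (norm (x - Z))\<^sup>2 + \<mu> * (\<Sum>i<?n. wh i * sing_val x i)
        \<le> (1/2) * (norm (Y - Z))\<^sup>2 + \<mu> * (\<Sum>i<?n. wh i * sing_val Y i)" for Y
    proof (rule LIMSEQ_le)
      show "(\<lambda>k. (1/2) * (norm (Xs (Suc (r k)) - (Xs (r k) - \<mu> *\<^sub>R gradf (Xs (r k)))))\<^sup>2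
         + \<mu> * (\<Sum>i<?n. w (sing_val (Xs (r k)) i) * sing_val (Xs (Suc (r k))) i))
        \<longlonglongrightarrow> (1/2) * (norm (x - Z))\<^sup>2 + \<mu> * (\<Sum>i<?n. wh i * sing_val x i)"
        unfolding Z_def wh_def G_def w_def
        by (intro tendsto_intros A1 A2 gtend[OF A1] svtend[OF A1] svtend[OF A2] tendsto_powr)
          (use svne in auto)
      show "(\<lambda>k. (1/2) * (norm (Y - (Xs (r k) - \<mu> *\<^sub>R gradf (Xs (r k)))))\<^sup>2
         + \<mu> * (\<Sum>i<?n. w (sing_val (Xs (r k)) i) * sing_val Y i))
        \<longlonglongrightarrow> (1/2) * (norm (Y - Z))\<^sup>2 + \<mu> * (\<Sum>i<?n. wh i * sing_val Y i)"
        unfolding Z_def wh_def G_def w_def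
        by (intro tendsto_intros A1 gtend[OF A1] svtend[OF A1] tendsto_powr)
          (use svne in auto)
      show "\<exists>N. \<forall>k\<ge>N. (1/2) * (norm (Xs (Suc (r k)) - (Xs (r k) - \<mu> *\<^sub>R gradf (Xs (r k)))))\<^sup>2
         + \<mu> * (\<Sum>i<?n. w (sing_val (Xs (r k)) i) * sing_val (Xs (Suc (r k))) i)
        \<le> (1/2) * (norm (Y - (Xs (r k) - \<mu> *\<^sub>R gradf (Xs (r k)))))\<^sup>2
         + \<mu> * (\<Sum>i<?n. w (sing_val (Xs (r k)) i) * sing_val Y i)"
        using step' by blast
    qed
    define C where "C = L / 2 + 1 / (2 * \<mu>)"
    define g where "g = (\<lambda>z. - C * norm z - (\<Sum>i<?n. \<bar>w (sing_val (x + z) i) - wh i\<bar>))"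
    have key: "g z \<le> (F (x + z) - F x - inner 0 z) / norm z" if z0: "z \<noteq> 0" for z
    proof -
      define Y where "Y = x + z"
      define T where "T = (\<Sum>i<?n. wh i * (sing_val Y i - sing_val x i))"
      define Q where "Q = (\<Sum>i<?n. \<bar>w (sing_val Y i) - wh i\<bar>)"
      have o: "(1/2) * (norm (x - Z))\<^sup>2 + \<mu> * (\<Sum>i<?n. wh i * sing_val x i)
        \<le> (1/2) * (norm (Y - Z))\<^sup>2 + \<mu> * (\<Sum>i<?n. wh i * sing_val Y i)" by (rule opt)
      have e1: "(norm (x - Z))^2 = \<mu>^2 * (norm G)^2" by (simp add: Z_def power_mult_distrib)
      have e2: "(norm (Y - Z))^2 = (norm z)^2 + 2 * \<mu> * (z \<bullet> G) + \<mu>^2 * (norm G)^2"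
      proof -
        have "Y - Z = z + \<mu> *\<^sub>R G" by (simp add: Y_def Z_def)
        thus ?thesis using normsq[of z "\<mu> *\<^sub>R G"] by (simp add: power_mult_distrib)
      qed
      have e3: "(\<Sum>i<?n. wh i * sing_val Y i) - (\<Sum>i<?n. wh i * sing_val x i) = T"
        by (simp add: T_def sum_subtractf[symmetric] right_diff_distrib)
      have "0 \<le> (1/2) * (norm z)^2 + \<mu> * (z \<bullet> G) + \<mu> * T"
        using o e3 unfolding e1 e2 by (simp add: algebra_simps)
      hence "0 \<le> \<mu> * (T + z \<bullet> G + (norm z)^2 / (2 * \<mu>))"
        using mu(1) by (simp add: algebra_simps)
      hence Tb: "- (z \<bullet> G) - (norm z)^2 / (2 * \<mu>) \<le> T"
        using mu(1) by (simp add: zero_le_mult_iff)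
      have fl: "f x + G \<bullet> z - L / 2 * (norm z)^2 \<le> f Y"
        using descent_lower[OF grad L(2) L0, of x z] by (simp add: G_def Y_def)
      have hi: "wh i * (sing_val Y i - sing_val x i) - \<bar>w (sing_val Y i) - wh i\<bar> * norm z
          \<le> h (sing_val Y i) - h (sing_val x i)" for i
      proof -
        have c1: "h (sing_val x i) \<le> h (sing_val Y i) + w (sing_val Y i) * (sing_val x i - sing_val Y i)"
          by (rule conc[OF sv0 sv0])
        have "\<bar>sing_val Y i - sing_val x i\<bar> \<le> norm z" using svlip[of Y i x] by (simp add: Y_def)
        hence "\<bar>(w (sing_val Y i) - wh i) * (sing_val Y i - sing_val x i)\<bar> \<le> \<bar>w (sing_val Y i) - wh i\<bar> * norm z"
          by (simp add: abs_mult mult_left_mono)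
        hence "- (\<bar>w (sing_val Y i) - wh i\<bar> * norm z) \<le> (w (sing_val Y i) - wh i) * (sing_val Y i - sing_val x i)"
          by linarith
        thus ?thesis using c1 by (simp add: algebra_simps)
      qed
      have hs: "T - Q * norm z \<le> (\<Sum>i<?n. h (sing_val Y i)) - (\<Sum>i<?n. h (sing_val x i))"
      proof -
        have "(\<Sum>i<?n. wh i * (sing_val Y i - sing_val x i) - \<bar>w (sing_val Y i) - wh i\<bar> * norm z)
            \<le> (\<Sum>i<?n. h (sing_val Y i) - h (sing_val x i))"
          by (rule sum_mono) (rule hi)
        thus ?thesis by (simp add: T_def Q_def sum_subtractf sum_distrib_right)
      qed
      have "norm z * g z = - C * (norm z)^2 - Q * norm z"
        by (simp add: g_def Q_def Y_def power2_eq_square algebra_simps)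
      also have "\<dots> \<le> F Y - F x"
        using fl hs Tb by (simp add: Fh C_def inner_commute algebra_simps)
      finally have "norm z * g z \<le> F Y - F x" .
      moreover have "norm z > 0" using z0 by simp
      ultimately show ?thesis by (simp add: Y_def pos_le_divide_eq mult.commute)
    qed
    have glim: "(g \<longlongrightarrow> 0) (at 0)"
    proof -
      have xz: "((\<lambda>z. x + z) \<longlongrightarrow> x) (at 0)"
        using tendsto_add[OF tendsto_const[of x] tendsto_ident_at[of 0 UNIV]] by simp
      have "(g \<longlongrightarrow> - C * norm (0::real^'n^'m) - (\<Sum>i<?n. \<bar>w (sing_val x i) - wh i\<bar>)) (at 0)"
        unfolding g_def w_def
        by (intro tendsto_intros svtend[OF xz] tendsto_powr) (use svne in auto)
      thus ?thesis by (simp add: wh_def)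
    qed
    have reg: "0 \<in> regular_subdiff F x"
      unfolding regular_subdiff_def mem_Collect_eq le_Liminf_iff
    proof (intro allI impI)
      fix y :: ereal assume y0: "y < 0"
      have "((\<lambda>z. ereal (g z)) \<longlongrightarrow> ereal 0) (at 0)" using glim by (rule tendsto_ereal)
      hence ev: "\<forall>\<^sub>F z in at 0. y < ereal (g z)" using y0 order_tendstoD(1) zero_ereal_def by metis
      show "\<forall>\<^sub>F z in at 0. y < ereal ((F (x + z) - F x - inner 0 z) / norm z)"
      proof (rule eventually_mono[OF eventually_conj[OF ev eventually_neq_at_within[of 0 0 UNIV]]])
        fix z :: "real^'n^'m" assume "y < ereal (g z) \<and> z \<noteq> 0"
        thus "y < ereal ((F (x + z) - F x - inner 0 z) / norm z)"
          using key[of z] by (meson ereal_less_eq(3) less_le_trans)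
      qed
    qed
    show ?thesis unfolding crit_def limiting_subdiff_def mem_Collect_eq
      by (rule exI[of _ "\<lambda>_. x"], rule exI[of _ "\<lambda>_. 0"]) (simp add: reg)
  qed
  show ?thesis
    using LP crit Fconst by blast
qed


end
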